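(* Let $G$ and $T$ be graphs of order $n$, where $T$ is a tree. If $3\Delta(G)+\ell(T)-2<n$, then $G$ and $T$ pack.
   Context: All graphs are finite and simple; $\Delta(G)$ is the maximum degree of $G$ and $\ell(T)$ is the number of leaves (vertices of degree $1$) of $T$. For graphs $G$ and $H$ with $|V(G)|\ge |V(H)|$, we say $G$ and $H$ pack if there is an injective function $f:V(H)\to V(G)$ such that for every edge $xy\in E(H)$, $f(x)f(y)\notin E(G)$. *)

theory Defs
  imports Main
begin

definition sgraph :: "'a set \<Rightarrow> 'a set set \<Rightarrow> bool" where
  "sgraph V E \<longleftrightarrow> finite V \<and> (\<forall>e\<in>E. \<exists>x y. x \<noteq> y \<and> x \<in> V \<and> y \<in> V \<and> e = {x, y})"

definition adj :: "'a set set \<Rightarrow> 'a \<Rightarrow> 'a \<Rightarrow> bool" where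
  "adj E u v \<longleftrightarrow> {u, v} \<in> E"

definition degree :: "'a set \<Rightarrow> 'a set set \<Rightarrow> 'a \<Rightarrow> nat" where
  "degree V E v = card {u \<in> V. adj E u v}"

definition max_degree :: "'a set \<Rightarrow> 'a set set \<Rightarrow> nat" where
  "max_degree V E = Max (insert 0 (degree V E ` V))"

definition num_leaves :: "'a set \<Rightarrow> 'a set set \<Rightarrow> nat" where
  "num_leaves V E = card {v \<in> V. degree V E v = 1}"

definition connected_graph :: "'a set \<Rightarrow> 'a set set \<Rightarrow> bool" where
  "connected_graph V E \<longleftrightarrow> (\<forall>u\<in>V. \<forall>v\<in>V. (adj E)\<^sup>*\<^sup>* u v)"

definition is_cycle :: "'a set \<Rightarrow> 'a set set \<Rightarrow> 'a list \<Rightarrow> bool" where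
  "is_cycle V E cs \<longleftrightarrow> length cs \<ge> 3 \<and> distinct cs \<and> set cs \<subseteq> V \<and>
     (\<forall>i. Suc i < length cs \<longrightarrow> adj E (cs ! i) (cs ! Suc i)) \<and>
     adj E (last cs) (hd cs)"

definition acyclic_graph :: "'a set \<Rightarrow> 'a set set \<Rightarrow> bool" where
  "acyclic_graph V E \<longleftrightarrow> \<not> (\<exists>cs. is_cycle V E cs)"

definition is_tree :: "'a set \<Rightarrow> 'a set set \<Rightarrow> bool" where
  "is_tree V E \<longleftrightarrow> sgraph V E \<and> V \<noteq> {} \<and> connected_graph V E \<and> acyclic_graph V E"

text \<open>(VG,EG) and (VH,EH) pack (for |VG| \<ge> |VH|): injective f from VH into VG mapping
  edges of H to non-edges of G.\<close>
definition packs :: "'a set \<Rightarrow> 'a set set \<Rightarrow> 'b set \<Rightarrow> 'b set set \<Rightarrow> bool" where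
  "packs VG EG VH EH \<longleftrightarrow> (\<exists>f. inj_on f VH \<and> f ` VH \<subseteq> VG \<and>
     (\<forall>x\<in>VH. \<forall>y\<in>VH. {x, y} \<in> EH \<longrightarrow> {f x, f y} \<notin> EG))"

end

theory Submission
  imports Defs
begin

lemma adj_sym: "adj E u v = adj E v u"
  by (simp add: adj_def insert_commute)

lemma adj_noloop: "sgraph V E \<Longrightarrow> \<not> adj E x x"
  unfolding sgraph_def adj_def by (metis doubleton_eq_iff insert_absorb2)

lemma adj_in: "sgraph V E \<Longrightarrow> adj E x y \<Longrightarrow> x \<in> V \<and> y \<in> V"
  unfolding sgraph_def adj_def by (metis doubleton_eq_iff)

definition is_path :: "'a set set \<Rightarrow> 'a list \<Rightarrow> bool" where
  "is_path E p \<longleftrightarrow> (\<forall>i. Suc i < length p \<longrightarrow> adj E (p!i) (p!Suc i))"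

lemma low_deg_vertex:
  assumes sg: "sgraph V E" and ac: "acyclic_graph V E"
    and S: "finite S" "S \<subseteq> V" "S \<noteq> {}"
  shows "\<exists>v\<in>S. card {x\<in>S. adj E x v} \<le> 1"
proof (rule ccontr)
  assume H: "\<not> ?thesis"
  hence H2: "\<And>v. v \<in> S \<Longrightarrow> card {x\<in>S. adj E x v} \<ge> 2" by force
  define P where "P p \<longleftrightarrow> distinct p \<and> set p \<subseteq> S \<and> p \<noteq> [] \<and> is_path E p" for p
  obtain s where s: "s \<in> S" using S by auto
  have P0: "P [s]" using s by (simp add: P_def is_path_def)
  have "\<exists>p. P p \<and> (\<forall>q. P q \<longrightarrow> length q \<le> length p)"
  proof (rule ex_has_greatest_nat[where b="Suc (card S)"])
    show "P [s]" by (rule P0)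
    show "\<forall>y. P y \<longrightarrow> length y < Suc (card S)"
      unfolding P_def using S(1) by (metis card_mono distinct_card less_Suc_eq_le)
  qed
  then obtain p where Pp: "P p" and pmax: "\<And>q. P q \<Longrightarrow> length q \<le> length p" by blast
  define x where "x = hd p"
  have p0: "p ! 0 = x" using Pp by (simp add: P_def x_def hd_conv_nth)
  have xS: "x \<in> S" using Pp by (auto simp: P_def x_def)
  have "card {y\<in>S. adj E y x} \<ge> 2" using H2 xS .
  then obtain y where yS: "y \<in> S" and yx: "adj E y x" and y1: "length p \<ge> 2 \<Longrightarrow> y \<noteq> p!1"
  proof -
    assume r: "\<And>y. y \<in> S \<Longrightarrow> adj E y x \<Longrightarrow> (2 \<le> length p \<Longrightarrow> y \<noteq> p ! 1) \<Longrightarrow> thesis"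
    have "\<exists>y\<in>{y\<in>S. adj E y x}. y \<noteq> p!1"
    proof (rule ccontr)
      assume "\<not> ?thesis"
      hence "{y\<in>S. adj E y x} \<subseteq> {p!1}" by auto
      hence "card {y\<in>S. adj E y x} \<le> 1" by (metis card.empty card_insert_disjoint card_mono empty_iff finite.emptyI finite.insertI le_zero_eq One_nat_def)
      thus False using \<open>card {y\<in>S. adj E y x} \<ge> 2\<close> by simp
    qed
    thus thesis using r by auto
  qed
  have yx': "y \<noteq> x" using yx adj_noloop[OF sg] by auto
  show False
  proof (cases "y \<in> set p")
    case False
    have "P (y # p)" using Pp False yS yx unfolding P_def is_path_def
      apply (auto simp: nth_Cons split: nat.splits)
      using p0 apply (metis adj_sym)
      done
    thus False using pmax[of "y#p"] by simp
  next
    case True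
    then obtain j where j: "j < length p" "p ! j = y" by (auto simp: in_set_conv_nth)
    have "j \<noteq> 0" using j p0 yx' by (metis)
    moreover have "j \<noteq> 1" using j y1 by auto
    ultimately have j2: "j \<ge> 2" by simp
    define cs where "cs = take (Suc j) p"
    have "is_cycle V E cs" unfolding is_cycle_def
    proof (intro conjI)
      show "3 \<le> length cs" using j j2 by (simp add: cs_def)
      show "distinct cs" using Pp by (simp add: cs_def P_def)
      show "set cs \<subseteq> V" using Pp S by (auto simp: cs_def P_def dest: in_set_takeD)
      show "\<forall>i. Suc i < length cs \<longrightarrow> adj E (cs ! i) (cs ! Suc i)"
        using Pp by (simp add: cs_def P_def is_path_def)
      have "last cs = y" using j by (metis Suc_leI Suc_neq_Zero cs_def diff_Suc_1 last_conv_nth length_take lessI list.size(3) min_absorb2 nth_take)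
      moreover have "hd cs = x" using Pp by (simp add: cs_def x_def P_def hd_take)
      ultimately show "adj E (last cs) (hd cs)" using yx by simp
    qed
    thus False using ac by (auto simp: acyclic_graph_def)
  qed
qed

lemma deg_sum:
  assumes sg: "sgraph V E" and ac: "acyclic_graph V E"
  shows "finite S \<Longrightarrow> S \<subseteq> V \<Longrightarrow> S \<noteq> {} \<Longrightarrow>
     (\<Sum>x\<in>S. card {u\<in>S. adj E u x}) + 2 \<le> 2 * card S"
proof (induction "card S" arbitrary: S rule: less_induct)
  case less
  obtain v where v: "v \<in> S" "card {x\<in>S. adj E x v} \<le> 1"
    using low_deg_vertex[OF sg ac less.prems] by auto
  show ?case
  proof (cases "S = {v}")
    case True
    then show ?thesis using adj_noloop[OF sg, of v] by simp
  next
    case False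
    define S' where "S' = S - {v}"
    have S'ne: "S' \<noteq> {}" using False v by (auto simp: S'_def)
    have fS': "finite S'" using less.prems by (simp add: S'_def)
    have cS: "card S = Suc (card S')" using v less.prems by (simp add: S'_def card_gt_0_iff)
    have IH: "(\<Sum>x\<in>S'. card {u\<in>S'. adj E u x}) + 2 \<le> 2 * card S'"
      using less.hyps[of S'] cS fS' S'ne less.prems by (auto simp: S'_def)
    have split: "(\<Sum>x\<in>S. card {u\<in>S. adj E u x}) = card {u\<in>S. adj E u v} + (\<Sum>x\<in>S'. card {u\<in>S. adj E u x})"
      using v less.prems by (simp add: S'_def sum.remove)
    have pt: "card {u\<in>S. adj E u x} \<le> card {u\<in>S'. adj E u x} + (if adj E v x then 1 else 0)" if "x \<in> S'" for x
    proof -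
      have "{u\<in>S. adj E u x} \<subseteq> {u\<in>S'. adj E u x} \<union> (if adj E v x then {v} else {})"
        by (auto simp: S'_def)
      hence "card {u\<in>S. adj E u x} \<le> card ({u\<in>S'. adj E u x} \<union> (if adj E v x then {v} else {}))"
        by (intro card_mono) (auto simp: fS')
      also have "\<dots> \<le> card {u\<in>S'. adj E u x} + card (if adj E v x then {v} else {} :: 'a set)"
        by (rule card_Un_le)
      finally show ?thesis by auto
    qed
    have "(\<Sum>x\<in>S'. card {u\<in>S. adj E u x}) \<le> (\<Sum>x\<in>S'. card {u\<in>S'. adj E u x} + (if adj E v x then 1 else 0))"
      by (rule sum_mono) (rule pt)
    also have "\<dots> = (\<Sum>x\<in>S'. card {u\<in>S'. adj E u x}) + card {x\<in>S'. adj E v x}"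
      using fS' by (simp add: sum.distrib sum.inter_filter[symmetric])
    also have "card {x\<in>S'. adj E v x} \<le> card {u\<in>S. adj E u v}"
      using less.prems by (intro card_mono) (auto simp: S'_def adj_sym)
    finally show ?thesis using split IH v cS by linarith
  qed
qed

lemma deg_pos:
  assumes tr: "is_tree V E" and c2: "card V \<ge> 2" and x: "x \<in> V"
  shows "degree V E x \<ge> 1"
proof -
  have sg: "sgraph V E" and fin: "finite V" and con: "connected_graph V E"
    using tr by (auto simp: is_tree_def sgraph_def)
  obtain y where y: "y \<in> V" "y \<noteq> x"
  proof -
    have "\<not> V \<subseteq> {x}"
    proof
      assume "V \<subseteq> {x}"
      hence "card V \<le> card {x}" by (intro card_mono) auto
      thus False using c2 by simp
    qed
    thus thesis using that by auto
  qed
  have "(adj E)\<^sup>*\<^sup>* x y" using con x y by (auto simp: connected_graph_def)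
  then obtain z where "adj E x z" using y(2) by (metis converse_rtranclpE)
  hence "z \<in> {u\<in>V. adj E u x}" using adj_in[OF sg] by (auto simp: adj_sym)
  moreover have "finite {u\<in>V. adj E u x}" using fin by simp
  ultimately show ?thesis unfolding degree_def by (metis One_nat_def Suc_leI card_gt_0_iff empty_iff)
qed

lemma leaf_bound:
  assumes tr: "is_tree V E" and c2: "card V \<ge> 2" and W: "W \<subseteq> V" "W \<noteq> {}"
  shows "int (\<Sum>w\<in>W. degree V E w) + 2 \<le> 2 * int (card W) + int (num_leaves V E)"
proof -
  have sg: "sgraph V E" and fin: "finite V" and ac: "acyclic_graph V E"
    using tr by (auto simp: is_tree_def sgraph_def)
  have finW: "finite W" using fin W finite_subset by blast
  have tot: "(\<Sum>x\<in>V. degree V E x) + 2 \<le> 2 * card V"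
    using deg_sum[OF sg ac fin order_refl] tr unfolding degree_def is_tree_def by auto
  have pt: "2 \<le> degree V E x + (if degree V E x = 1 then 1 else 0)" if "x \<in> V - W" for x
    using deg_pos[OF tr c2, of x] that by auto
  have "(\<Sum>x\<in>V-W. 2::nat) \<le> (\<Sum>x\<in>V-W. degree V E x + (if degree V E x = 1 then 1 else 0))"
    by (rule sum_mono) (rule pt)
  also have "\<dots> = (\<Sum>x\<in>V-W. degree V E x) + card {x\<in>V-W. degree V E x = 1}"
    using fin by (simp add: sum.distrib sum.inter_filter[symmetric])
  finally have A: "2 * card (V - W) \<le> (\<Sum>x\<in>V-W. degree V E x) + card {x\<in>V-W. degree V E x = 1}"
    by simp
  have B: "card {x\<in>V-W. degree V E x = 1} \<le> num_leaves V E"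
    unfolding num_leaves_def using fin by (intro card_mono) auto
  have C: "(\<Sum>x\<in>V. degree V E x) = (\<Sum>x\<in>W. degree V E x) + (\<Sum>x\<in>V-W. degree V E x)"
    using fin W by (simp add: sum.subset_diff[of W V] add.commute)
  have D: "card (V - W) = card V - card W" "card W \<le> card V"
    using fin W by (auto simp: card_Diff_subset finW card_mono)
  show ?thesis using A B C D tot by linarith
qed

definition goodemb where
  "goodemb VG EG ET S f \<longleftrightarrow> inj_on f S \<and> f ` S \<subseteq> VG \<and>
      (\<forall>x\<in>S. \<forall>y\<in>S. adj ET x y \<longrightarrow> \<not> adj EG (f x) (f y))"

lemma maxdeg_ge:
  assumes "sgraph VG EG" "b \<in> VG"
  shows "card {c\<in>VG. adj EG c b} \<le> max_degree VG EG"
proof -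
  have "finite VG" using assms by (simp add: sgraph_def)
  thus ?thesis unfolding max_degree_def using assms(2)
    by (intro Max_ge) (auto simp: degree_def)
qed

lemma card_insert_le_m1'': "card (insert x A) \<le> Suc (card A)"
  by (cases "finite A") (auto simp: card_insert_if)

lemma embed:
  assumes sgG: "sgraph VG EG" and tr: "is_tree VT ET" and cG: "card VG = n" and cT: "card VT = n"
    and hyp: "3 * int (max_degree VG EG) + int (num_leaves VT ET) - 2 < int n"
  shows "S \<subseteq> VT \<Longrightarrow> \<exists>f. goodemb VG EG ET S f"
proof (induction "card S" arbitrary: S rule: less_induct)
  case less
  have sgT: "sgraph VT ET" and finT: "finite VT" and acT: "acyclic_graph VT ET"
    using tr by (auto simp: is_tree_def sgraph_def)
  have finG: "finite VG" using sgG by (simp add: sgraph_def)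
  define D where "D = max_degree VG EG"
  have degG: "\<And>b. b \<in> VG \<Longrightarrow> card {c\<in>VG. adj EG c b} \<le> D"
    unfolding D_def by (rule maxdeg_ge[OF sgG])
  have finS: "finite S" using less.prems finT finite_subset by blast
  show ?case
  proof (cases "S = {}")
    case True
    then show ?thesis by (auto simp: goodemb_def)
  next
    case False
    obtain v where v: "v \<in> S" "card {x\<in>S. adj ET x v} \<le> 1"
      using low_deg_vertex[OF sgT acT finS less.prems False] by auto
    define S' where "S' = S - {v}"
    have cS: "card S = Suc (card S')" using v finS by (metis S'_def card_Suc_Diff1)
    have fS': "finite S'" using finS by (simp add: S'_def)
    obtain f where f: "goodemb VG EG ET S' f"
      using less.hyps[of S'] cS less.prems by (auto simp: S'_def)
    have finj: "inj_on f S'" and fim: "f ` S' \<subseteq> VG"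
      and fok: "\<And>x y. x \<in> S' \<Longrightarrow> y \<in> S' \<Longrightarrow> adj ET x y \<Longrightarrow> \<not> adj EG (f x) (f y)"
      using f by (auto simp: goodemb_def)
    define U where "U = VG - f ` S'"
    have cSn: "card S \<le> n" using less.prems finT cT card_mono by metis
    have cU: "card U = n - card S'"
    proof -
      have "card (VG - f ` S') = card VG - card (f ` S')"
        using fim finG by (meson card_Diff_subset finite_subset)
      thus ?thesis using finj by (simp add: U_def card_image cG)
    qed
    hence cU1: "card U = Suc (n - card S)" using cS cSn by simp
    have finU: "finite U" using finG by (simp add: U_def)
    have vS': "v \<notin> S'" by (simp add: S'_def)
    have Sdec: "S = insert v S'" using v by (auto simp: S'_def)
    have ext: "goodemb VG EG ET S (f(v := a))"
      if aU: "a \<in> U" and ok: "\<And>u. u \<in> S' \<Longrightarrow> adj ET u v \<Longrightarrow> \<not> adj EG (f u) a" for a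
    proof -
      have "inj_on (f(v := a)) S" unfolding Sdec using finj vS' aU
        by (auto simp: U_def inj_on_def)
      moreover have "(f(v := a)) ` S \<subseteq> VG" unfolding Sdec using fim vS' aU by (auto simp: U_def)
      moreover have "\<forall>x\<in>S. \<forall>y\<in>S. adj ET x y \<longrightarrow> \<not> adj EG ((f(v := a)) x) ((f(v := a)) y)"
      proof (intro ballI impI)
        fix x y assume x: "x \<in> S" and y: "y \<in> S" and xy: "adj ET x y"
        have xyne: "x \<noteq> y" using xy adj_noloop[OF sgT] by auto
        show "\<not> adj EG ((f(v := a)) x) ((f(v := a)) y)"
        proof (cases "x = v")
          case True
          hence "y \<in> S'" using y xyne by (auto simp: S'_def)
          thus ?thesis using ok[of y] xy True xyne by (auto simp: adj_sym[of ET] adj_sym[of EG])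
        next
          case False
          hence xS': "x \<in> S'" using x by (auto simp: S'_def)
          show ?thesis
          proof (cases "y = v")
            case True
            thus ?thesis using ok[of x] xy xS' False by auto
          next
            case False
            hence "y \<in> S'" using y by (auto simp: S'_def)
            thus ?thesis using fok[OF xS'] xy False \<open>x \<noteq> v\<close> by auto
          qed
        qed
      qed
      ultimately show ?thesis by (simp add: goodemb_def)
    qed
    show ?thesis
    proof (cases "\<exists>a\<in>U. \<forall>u. u \<in> S' \<longrightarrow> adj ET u v \<longrightarrow> \<not> adj EG (f u) a")
      case True
      then show ?thesis using ext by blast
    next
      case False
      have Une: "U \<noteq> {}" using cU1 by auto
      then obtain a where aU: "a \<in> U" by auto
      then obtain u where uS': "u \<in> S'" and uv: "adj ET u v" and fua: "adj EG (f u) a"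
        using False by blast
      have uniq: "u' = u" if "u' \<in> S'" "adj ET u' v" for u'
      proof -
        have "finite {x\<in>S. adj ET x v}" using finS by simp
        moreover have "u \<in> {x\<in>S. adj ET x v}" "u' \<in> {x\<in>S. adj ET x v}"
          using uS' uv that by (auto simp: S'_def)
        ultimately show ?thesis using v(2) card_le_Suc0_iff_eq by (metis One_nat_def)
      qed
      have allU: "adj EG (f u) b" if "b \<in> U" for b
        using False that uniq by blast
      have uVT: "u \<in> VT" and vVT: "v \<in> VT" using uS' v less.prems by (auto simp: S'_def)
      have uv_ne: "u \<noteq> v" using uS' vS' by auto
      have c2: "card VT \<ge> 2"
      proof -
        have "card {u, v} \<le> card VT" using uVT vVT finT by (intro card_mono) auto
        thus ?thesis using uv_ne by simp
      qed
      have fuG: "f u \<in> VG" using fim uS' by auto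
      have aG: "a \<in> VG" using aU by (simp add: U_def)
      define B1 where "B1 = {z\<in>S'. adj EG (f u) (f z)}"
      have cB1: "card B1 + card U \<le> D"
      proof -
        have "f ` B1 \<union> U \<subseteq> {c\<in>VG. adj EG c (f u)}"
          using fim allU by (auto simp: B1_def U_def adj_sym[of EG])
        hence "card (f ` B1 \<union> U) \<le> card {c\<in>VG. adj EG c (f u)}"
          using finG by (intro card_mono) auto
        also have "\<dots> \<le> D" using degG[OF fuG] .
        also have "card (f ` B1 \<union> U) = card (f ` B1) + card U"
          using finU fS' by (intro card_Un_disjoint) (auto simp: B1_def U_def)
        also have "card (f ` B1) = card B1"
          using finj by (intro card_image) (auto simp: B1_def intro: inj_on_subset)
        finally show ?thesis .
      qed
      define W where "W = {w\<in>S'. adj EG (f w) a}"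
      have uW: "u \<in> W" using uS' fua by (simp add: W_def)
      have WVT: "W \<subseteq> VT" using less.prems by (auto simp: W_def S'_def)
      have cW: "card W \<le> D"
      proof -
        have "f ` W \<subseteq> {c\<in>VG. adj EG c a}" using fim by (auto simp: W_def)
        hence "card (f ` W) \<le> card {c\<in>VG. adj EG c a}" using finG by (intro card_mono) auto
        also have "\<dots> \<le> D" using degG[OF aG] .
        also have "card (f ` W) = card W"
          using finj by (intro card_image) (auto simp: W_def intro: inj_on_subset)
        finally show ?thesis by simp
      qed
      define NW where "NW = (\<Union>w\<in>W. {z\<in>VT. adj ET z w})"
      have finW: "finite W" using fS' by (simp add: W_def)
      have cNW: "card NW \<le> (\<Sum>w\<in>W. degree VT ET w)"
        unfolding NW_def degree_def using finW by (rule card_UN_le)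
      have lb: "int (\<Sum>w\<in>W. degree VT ET w) + 2 \<le> 2 * int (card W) + int (num_leaves VT ET)"
        using leaf_bound[OF tr c2 WVT] uW by auto
      have vNW: "v \<in> NW" using vVT uW uv by (auto simp: NW_def adj_sym[of ET])
      define Bad where "Bad = insert u (B1 \<union> NW)"
      have "B1 \<subseteq> S'" "NW \<subseteq> VT" by (auto simp: B1_def NW_def)
      hence finBad: "finite Bad" unfolding Bad_def using fS' finT by (meson finite_Un finite_insert finite_subset)
      have "card Bad \<le> Suc (card B1 + card NW)"
      proof -
        have "card Bad \<le> Suc (card (B1 \<union> NW))" unfolding Bad_def by (rule card_insert_le_m1'')
        also have "card (B1 \<union> NW) \<le> card B1 + card NW" by (rule card_Un_le)
        finally show ?thesis by simp
      qed
      hence i1: "int (card Bad) \<le> 1 + int (card B1) + int (card NW)" by linarith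
      have i2: "int (card B1) + int (card U) \<le> int D" using cB1 by linarith
      have i3: "int (card U) = int n - int (card S) + 1" using cU1 cSn by simp
      have i4: "int (card NW) + 2 \<le> 2 * int D + int (num_leaves VT ET)"
        using cNW cW lb by linarith
      have i5: "3 * int D + int (num_leaves VT ET) - 2 < int n" using hyp by (simp add: D_def)
      have "int (card Bad) < int (card S)" using i1 i2 i3 i4 i5 by linarith
      hence "\<not> S \<subseteq> Bad"
      proof (intro notI)
        assume "S \<subseteq> Bad"
        hence "card S \<le> card Bad" using finBad by (rule card_mono[rotated])
        thus False using \<open>int (card Bad) < int (card S)\<close> by simp
      qed
      then obtain z where zS: "z \<in> S" and zBad: "z \<notin> Bad" by auto
      have zv: "z \<noteq> v" using zBad vNW by (auto simp: Bad_def)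
      have zS': "z \<in> S'" using zS zv by (simp add: S'_def)
      have zu: "z \<noteq> u" using zBad by (simp add: Bad_def)
      have c1: "\<not> adj EG (f u) (f z)" using zBad zS' by (simp add: Bad_def B1_def)
      have c2': "\<not> adj EG a (f w)" if "w \<in> S'" "adj ET z w" for w
      proof
        assume "adj EG a (f w)"
        hence "w \<in> W" using that by (simp add: W_def adj_sym[of EG])
        hence "z \<in> NW" using that zS less.prems by (auto simp: NW_def)
        thus False using zBad by (simp add: Bad_def)
      qed
      define h where "h = f(v := f z, z := a)"
      have hv: "h v = f z" and hz: "h z = a" and ho: "\<And>x. x \<noteq> v \<Longrightarrow> x \<noteq> z \<Longrightarrow> h x = f x"
        using zv by (auto simp: h_def)
      have aS': "a \<notin> f ` S'" using aU by (simp add: U_def)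
      have "inj_on h S"
      proof (rule inj_onI)
        fix x y assume x: "x \<in> S" and y: "y \<in> S" and e: "h x = h y"
        have tr': "t \<in> S' \<or> t = v" if "t \<in> S" for t using that by (auto simp: S'_def)
        show "x = y"
        proof (cases "x = z \<or> y = z")
          case True
          thus ?thesis using tr'[OF x] tr'[OF y] e hv hz ho aS' zS' by (metis image_eqI)
        next
          case F: False
          show ?thesis
          proof (cases "x = v \<or> y = v")
            case True
            thus ?thesis using tr'[OF x] tr'[OF y] e hv ho F zS' inj_onD[OF finj] by metis
          next
            case False
            thus ?thesis using tr'[OF x] tr'[OF y] e ho F inj_onD[OF finj] by metis
          qed
        qed
      qed
      moreover have "h ` S \<subseteq> VG"
      proof
        fix b assume "b \<in> h ` S"
        then obtain x where x: "x \<in> S" "b = h x" by auto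
        show "b \<in> VG"
        proof (cases "x = v \<or> x = z")
          case True thus ?thesis using x hv hz aG fim zS' by auto
        next
          case False thus ?thesis using x ho fim by (auto simp: S'_def)
        qed
      qed
      moreover have "\<forall>x\<in>S. \<forall>y\<in>S. adj ET x y \<longrightarrow> \<not> adj EG (h x) (h y)"
      proof -
        have one: "\<not> adj EG (h x) (h y)" if x: "x \<in> S" and y: "y \<in> S" and xy: "adj ET x y"
          and xc: "x = v \<or> x = z" for x y
        proof -
          have xyne: "x \<noteq> y" using xy adj_noloop[OF sgT] by auto
          show ?thesis
          proof (cases "x = v")
            case True
            hence yS': "y \<in> S'" using y xyne by (auto simp: S'_def)
            hence "y = u" using uniq xy True by (simp add: adj_sym[of ET])
            thus ?thesis using True hv ho[OF uv_ne zu[symmetric]] c1 by (simp add: adj_sym[of EG])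
          next
            case False
            hence xz: "x = z" using xc by simp
            show ?thesis
            proof (cases "y = v")
              case True
              hence "z = u" using uniq zS' xy xz by simp
              thus ?thesis using zu by simp
            next
              case False
              hence yS': "y \<in> S'" using y by (auto simp: S'_def)
              have "y \<noteq> z" using xyne xz by simp
              thus ?thesis using c2'[OF yS'] xy xz hz ho[OF False] by simp
            qed
          qed
        qed
        show ?thesis
        proof (intro ballI impI)
          fix x y assume x: "x \<in> S" and y: "y \<in> S" and xy: "adj ET x y"
          show "\<not> adj EG (h x) (h y)"
          proof (cases "x = v \<or> x = z")
            case True thus ?thesis using one x y xy by blast
          next
            case xF: False
            show ?thesis
            proof (cases "y = v \<or> y = z")
              case True thus ?thesis using one[OF y x] xy by (simp add: adj_sym[of ET] adj_sym[of EG])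
            next
              case False
              hence "x \<in> S'" "y \<in> S'" using x y xF by (auto simp: S'_def)
              thus ?thesis using fok xy ho xF False by auto
            qed
          qed
        qed
      qed
      ultimately show ?thesis unfolding goodemb_def by blast
    qed
  qed
qed

theorem corollary9:
  fixes VG :: "'a set" and EG :: "'a set set" and VT :: "'b set" and ET :: "'b set set"
    and n :: nat
  assumes "sgraph VG EG" and "is_tree VT ET"
    and "card VG = n" and "card VT = n"
    and "3 * int (max_degree VG EG) + int (num_leaves VT ET) - 2 < int n"
  shows "packs VG EG VT ET"
proof -
  obtain f where "goodemb VG EG ET VT f"
    using embed[OF assms order_refl] by blast
  thus ?thesis unfolding goodemb_def packs_def adj_def by blast
qed

end
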